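(* Let $\mathcal O\subseteq\mathcal O'$ be orders in the same number field $F$, let $\mathfrak m$ be an $\mathcal O'$-ideal (hence also an $\mathcal O$-ideal), and let $S$ be a subset of the real embeddings of $F$. Then the map $\mathrm{Cl}_{\mathfrak m,S}(\mathcal O)\to\mathrm{Cl}_{\mathfrak m,S}(\mathcal O')$ induced by extension of ideals $\mathfrak a\mapsto\mathfrak a\mathcal O'$ is an isomorphism.
   Context: For an order $\mathcal O$, ideal $\mathfrak m$ and set $S$ of real embeddings: an integral ideal $\mathfrak a$ is coprime to $\mathfrak m$ if $\mathfrak a+\mathfrak m=\mathcal O$, and a fractional ideal is coprime to $\mathfrak m$ if it is $\mathfrak a\mathfrak b^{-1}$ with $\mathfrak a$ integral, $\mathfrak b$ invertible integral, both coprime to $\mathfrak m$. $J^*_{\mathfrak m}(\mathcal O)$ is the group of invertible fractional $\mathcal O$-ideals coprime to $\mathfrak m$, $P_{\mathfrak m,S}(\mathcal O)$ is the subgroup of principal ideals $\alpha\mathcal O$ with $\alpha\equiv1\pmod{\mathfrak m}$ and $\rho(\alpha)>0$ for $\rho\in S$, and $\mathrm{Cl}_{\mathfrak m,S}(\mathcal O)=J^*_{\mathfrak m}(\mathcal O)/P_{\mathfrak m,S}(\mathcal O)$. *)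

theory Defs
  imports "HOL-Analysis.Analysis" "HOL-Algebra.Coset"
begin

text \<open>A number field is modelled as a subfield F of the complex numbers that is
finite-dimensional over the rationals.\<close>

definition subring_of :: "complex set \<Rightarrow> bool" where
  "subring_of R \<longleftrightarrow> 1 \<in> R \<and> (\<forall>x\<in>R. \<forall>y\<in>R. x + y \<in> R \<and> x - y \<in> R \<and> x * y \<in> R)"

definition number_field :: "complex set \<Rightarrow> bool" where
  "number_field F \<longleftrightarrow> subring_of F \<and> (\<forall>x\<in>F. x \<noteq> 0 \<longrightarrow> inverse x \<in> F) \<and>
     (\<exists>B. finite B \<and> B \<subseteq> F \<and> F \<subseteq> {\<Sum>b\<in>B. of_rat (c b) * b | c. True})"

text \<open>An order of F: a subring of F which is a finitely generated Z-module
spanning F over Q (i.e. a full-rank lattice).\<close>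

definition order_of :: "complex set \<Rightarrow> complex set \<Rightarrow> bool" where
  "order_of F R \<longleftrightarrow> number_field F \<and> R \<subseteq> F \<and> subring_of R \<and>
     (\<exists>B. finite B \<and> B \<subseteq> R \<and> R = {\<Sum>b\<in>B. of_int (c b) * b | c. True}) \<and>
     (\<forall>x\<in>F. \<exists>n::nat. n > 0 \<and> of_nat n * x \<in> R)"

definition submodule_of :: "complex set \<Rightarrow> complex set \<Rightarrow> complex set \<Rightarrow> bool" where
  "submodule_of F R I \<longleftrightarrow> I \<subseteq> F \<and> 0 \<in> I \<and>
     (\<forall>x\<in>I. \<forall>y\<in>I. x + y \<in> I) \<and> (\<forall>r\<in>R. \<forall>x\<in>I. r * x \<in> I)"

definition ideal_of :: "complex set \<Rightarrow> complex set \<Rightarrow> bool" where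
  "ideal_of R I \<longleftrightarrow> I \<subseteq> R \<and> submodule_of R R I"

definition isum :: "complex set \<Rightarrow> complex set \<Rightarrow> complex set" where
  "isum I J = {x + y | x y. x \<in> I \<and> y \<in> J}"

definition ideal_prod :: "complex set \<Rightarrow> complex set \<Rightarrow> complex set" where
  "ideal_prod I J = {x. \<exists>(n::nat) f g. (\<forall>k<n. f k \<in> I \<and> g k \<in> J) \<and> x = (\<Sum>k<n. f k * g k)}"

definition frac_ideal :: "complex set \<Rightarrow> complex set \<Rightarrow> complex set \<Rightarrow> bool" where
  "frac_ideal F R I \<longleftrightarrow> submodule_of F R I \<and> I \<noteq> {0} \<and>
     (\<exists>d\<in>R. d \<noteq> 0 \<and> (\<forall>x\<in>I. d * x \<in> R))"

definition invertible_frac :: "complex set \<Rightarrow> complex set \<Rightarrow> complex set \<Rightarrow> bool" where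
  "invertible_frac F R I \<longleftrightarrow> frac_ideal F R I \<and> (\<exists>J. frac_ideal F R J \<and> ideal_prod I J = R)"

text \<open>The inverse (R : b) of a fractional ideal; for invertible b this is b^{-1}.\<close>

definition iinv :: "complex set \<Rightarrow> complex set \<Rightarrow> complex set \<Rightarrow> complex set" where
  "iinv F R I = {x\<in>F. \<forall>y\<in>I. x * y \<in> R}"

definition coprime_int :: "complex set \<Rightarrow> complex set \<Rightarrow> complex set \<Rightarrow> bool" where
  "coprime_int R m a \<longleftrightarrow> ideal_of R a \<and> isum a m = R"

definition coprime_frac :: "complex set \<Rightarrow> complex set \<Rightarrow> complex set \<Rightarrow> complex set \<Rightarrow> bool" where
  "coprime_frac F R m I \<longleftrightarrow> (\<exists>a b. coprime_int R m a \<and> coprime_int R m b \<and>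
     invertible_frac F R b \<and> I = ideal_prod a (iinv F R b))"

definition Jstar :: "complex set \<Rightarrow> complex set \<Rightarrow> complex set \<Rightarrow> complex set set" where
  "Jstar F R m = {I. invertible_frac F R I \<and> coprime_frac F R m I}"

text \<open>alpha = 1 mod m: alpha = a/b with a, b in R, both coprime to m, a - b in m.\<close>

definition principal :: "complex set \<Rightarrow> complex \<Rightarrow> complex set" where
  "principal R \<alpha> = {\<alpha> * x | x. x \<in> R}"

definition cong1 :: "complex set \<Rightarrow> complex set \<Rightarrow> complex \<Rightarrow> bool" where
  "cong1 R m \<alpha> \<longleftrightarrow> (\<exists>a\<in>R. \<exists>b\<in>R. b \<noteq> 0 \<and> \<alpha> = a / b \<and>
     isum (principal R a) m = R \<and> isum (principal R b) m = R \<and> a - b \<in> m)"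

definition real_embedding :: "complex set \<Rightarrow> (complex \<Rightarrow> real) \<Rightarrow> bool" where
  "real_embedding F \<rho> \<longleftrightarrow> \<rho> 1 = 1 \<and>
     (\<forall>x\<in>F. \<forall>y\<in>F. \<rho> (x + y) = \<rho> x + \<rho> y \<and> \<rho> (x * y) = \<rho> x * \<rho> y)"

definition Pms :: "complex set \<Rightarrow> complex set \<Rightarrow> complex set \<Rightarrow> (complex \<Rightarrow> real) set \<Rightarrow> complex set set" where
  "Pms F R m S = {principal R \<alpha> | \<alpha>. \<alpha> \<in> F \<and> \<alpha> \<noteq> 0 \<and> cong1 R m \<alpha> \<and> (\<forall>\<rho>\<in>S. \<rho> \<alpha> > 0)}"

definition Jgrp :: "complex set \<Rightarrow> complex set \<Rightarrow> complex set \<Rightarrow> complex set monoid" where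
  "Jgrp F R m = \<lparr>carrier = Jstar F R m, mult = ideal_prod, one = R\<rparr>"

definition Clms :: "complex set \<Rightarrow> complex set \<Rightarrow> complex set \<Rightarrow> (complex \<Rightarrow> real) set \<Rightarrow> complex set set monoid" where
  "Clms F R m S = Jgrp F R m Mod Pms F R m S"

end

theory Submission
  imports Defs
begin


definition addcl :: "complex set \<Rightarrow> bool" where
  "addcl X \<longleftrightarrow> 0 \<in> X \<and> (\<forall>x\<in>X. \<forall>y\<in>X. x + y \<in> X)"

definition rmod :: "complex set \<Rightarrow> complex set \<Rightarrow> bool" where
  "rmod R X \<longleftrightarrow> addcl X \<and> (\<forall>r\<in>R. \<forall>x\<in>X. r * x \<in> X)"

lemma addcl_sum: "addcl X \<Longrightarrow> (\<forall>k<(n::nat). f k \<in> X) \<Longrightarrow> (\<Sum>k<n. f k) \<in> X"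
  by (induction n) (auto simp: addcl_def)

lemma prod_mem: "x \<in> I \<Longrightarrow> y \<in> J \<Longrightarrow> x * y \<in> ideal_prod I J"
  unfolding ideal_prod_def
  by (rule CollectI, rule exI[of _ 1], rule exI[of _ "\<lambda>_. x"], rule exI[of _ "\<lambda>_. y"]) auto

lemma prod_least: "addcl K \<Longrightarrow> (\<And>x y. x \<in> I \<Longrightarrow> y \<in> J \<Longrightarrow> x * y \<in> K) \<Longrightarrow> ideal_prod I J \<subseteq> K"
  unfolding ideal_prod_def by (auto intro!: addcl_sum)

lemma prod_add_step:
  assumes "z \<in> ideal_prod I J" "a \<in> I" "b \<in> J"
  shows "z + a * b \<in> ideal_prod I J"
proof -
  obtain n f g where fg: "\<forall>k<(n::nat). f k \<in> I \<and> g k \<in> J" "z = (\<Sum>k<n. f k * g k)"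
    using assms(1) unfolding ideal_prod_def by blast
  have "(\<Sum>k<Suc n. (f(n:=a)) k * (g(n:=b)) k) = z + a * b"
    using fg(2) by simp
  moreover have "\<forall>k<Suc n. (f(n:=a)) k \<in> I \<and> (g(n:=b)) k \<in> J"
    using fg(1) assms by (auto simp: less_Suc_eq)
  ultimately show ?thesis unfolding ideal_prod_def
    by (intro CollectI exI[of _ "Suc n"] exI[of _ "f(n:=a)"] exI[of _ "g(n:=b)"]) simp
qed

lemma prod_addcl: "addcl (ideal_prod I J)"
proof -
  have z: "0 \<in> ideal_prod I J" unfolding ideal_prod_def
    by (rule CollectI, rule exI[of _ 0]) auto
  have step: "x + (\<Sum>k<n. f k * g k) \<in> ideal_prod I J"
    if "x \<in> ideal_prod I J" "\<forall>k<(n::nat). f k \<in> I \<and> g k \<in> J" for x n f g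
    using that(2)
  proof (induction n)
    case 0 then show ?case using that(1) by simp
  next
    case (Suc n)
    then have "x + (\<Sum>k<n. f k * g k) + f n * g n \<in> ideal_prod I J"
      by (intro prod_add_step) auto
    then show ?case by (simp add: add.assoc)
  qed
  then have "x + y \<in> ideal_prod I J" if hx: "x \<in> ideal_prod I J" and hy: "y \<in> ideal_prod I J" for x y
  proof -
    obtain n f g where fg: "\<forall>k<(n::nat). f k \<in> I \<and> g k \<in> J" "y = (\<Sum>k<n. f k * g k)"
      using hy unfolding ideal_prod_def by blast
    show ?thesis using fg hx by (simp add: step)
  qed
  then show ?thesis using z unfolding addcl_def by blast
qed



lemma addclI: "0 \<in> X \<Longrightarrow> (\<And>x y. x \<in> X \<Longrightarrow> y \<in> X \<Longrightarrow> x + y \<in> X) \<Longrightarrow> addcl X"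
  unfolding addcl_def by blast

lemma addclD: "addcl X \<Longrightarrow> 0 \<in> X" "addcl X \<Longrightarrow> x \<in> X \<Longrightarrow> y \<in> X \<Longrightarrow> x + y \<in> X"
  unfolding addcl_def by blast+

lemma rmodD: "rmod R X \<Longrightarrow> 0 \<in> X" "rmod R X \<Longrightarrow> x \<in> X \<Longrightarrow> y \<in> X \<Longrightarrow> x + y \<in> X"
  "rmod R X \<Longrightarrow> r \<in> R \<Longrightarrow> x \<in> X \<Longrightarrow> r * x \<in> X"
  unfolding rmod_def addcl_def by blast+

lemma prod_zero: "0 \<in> ideal_prod I J" "x \<in> ideal_prod I J \<Longrightarrow> y \<in> ideal_prod I J \<Longrightarrow> x + y \<in> ideal_prod I J"
  using prod_addcl addclD by blast+

lemma prod_comm_sub: "ideal_prod I J \<subseteq> ideal_prod J I"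
proof (rule prod_least[OF prod_addcl])
  fix x y assume "x \<in> I" "y \<in> J"
  then have "y * x \<in> ideal_prod J I" by (rule prod_mem[of y J x I, rotated])
  then show "x * y \<in> ideal_prod J I" by (simp add: mult.commute)
qed

lemma prod_comm: "ideal_prod I J = ideal_prod J I"
  by (simp add: prod_comm_sub subset_antisym)

lemma prod_assoc_sub: "ideal_prod (ideal_prod I J) K \<subseteq> ideal_prod I (ideal_prod J K)"
proof (rule prod_least[OF prod_addcl])
  fix z w assume z: "z \<in> ideal_prod I J" and w: "w \<in> K"
  have "ideal_prod I J \<subseteq> {z. z * w \<in> ideal_prod I (ideal_prod J K)}"
  proof (rule prod_least)
    show "addcl {z. z * w \<in> ideal_prod I (ideal_prod J K)}"
      by (rule addclI) (auto simp: distrib_right prod_zero)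
    fix x y assume "x \<in> I" "y \<in> J"
    then show "x * y \<in> {z. z * w \<in> ideal_prod I (ideal_prod J K)}"
      using w by (simp add: mult.assoc prod_mem)
  qed
  then show "z * w \<in> ideal_prod I (ideal_prod J K)" using z by blast
qed

lemma prod_assoc: "ideal_prod (ideal_prod I J) K = ideal_prod I (ideal_prod J K)"
proof
  show "ideal_prod (ideal_prod I J) K \<subseteq> ideal_prod I (ideal_prod J K)" by (rule prod_assoc_sub)
  have "ideal_prod I (ideal_prod J K) = ideal_prod (ideal_prod K J) I"
    by (simp add: prod_comm)
  also have "\<dots> \<subseteq> ideal_prod K (ideal_prod J I)" by (rule prod_assoc_sub)
  also have "\<dots> = ideal_prod (ideal_prod I J) K" by (simp add: prod_comm)
  finally show "ideal_prod I (ideal_prod J K) \<subseteq> ideal_prod (ideal_prod I J) K" .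
qed

interpretation ip: abel_semigroup ideal_prod
  by unfold_locales (rule prod_assoc, rule prod_comm)

lemma prod_mono: "I \<subseteq> I' \<Longrightarrow> J \<subseteq> J' \<Longrightarrow> ideal_prod I J \<subseteq> ideal_prod I' J'"
proof -
  assume a: "I \<subseteq> I'" "J \<subseteq> J'"
  show ?thesis
  proof
    fix z assume "z \<in> ideal_prod I J"
    then obtain n f g where nfg: "\<forall>k<(n::nat). f k \<in> I \<and> g k \<in> J" "z = (\<Sum>k<n. f k * g k)"
      unfolding ideal_prod_def by blast
    show "z \<in> ideal_prod I' J'" unfolding ideal_prod_def using a nfg
      by (intro CollectI exI[of _ n] exI[of _ f] exI[of _ g]) auto
  qed
qed

lemma prod_rmod: "rmod R J \<Longrightarrow> rmod R (ideal_prod I J)"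
proof -
  assume J: "rmod R J"
  have "ideal_prod I J \<subseteq> {z. z \<in> ideal_prod I J \<and> (\<forall>r\<in>R. r * z \<in> ideal_prod I J)}"
  proof (rule prod_least)
    show "addcl {z. z \<in> ideal_prod I J \<and> (\<forall>r\<in>R. r * z \<in> ideal_prod I J)}"
    proof (rule addclI)
      show "0 \<in> {z. z \<in> ideal_prod I J \<and> (\<forall>r\<in>R. r * z \<in> ideal_prod I J)}"
        using prod_zero(1) by simp
      fix x y assume "x \<in> {z. z \<in> ideal_prod I J \<and> (\<forall>r\<in>R. r * z \<in> ideal_prod I J)}"
        "y \<in> {z. z \<in> ideal_prod I J \<and> (\<forall>r\<in>R. r * z \<in> ideal_prod I J)}"
      then show "x + y \<in> {z. z \<in> ideal_prod I J \<and> (\<forall>r\<in>R. r * z \<in> ideal_prod I J)}"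
        by (simp add: distrib_left prod_zero(2))
    qed
    fix x y assume "x \<in> I" "y \<in> J"
    then show "x * y \<in> {z. z \<in> ideal_prod I J \<and> (\<forall>r\<in>R. r * z \<in> ideal_prod I J)}"
    proof (intro CollectI conjI ballI)
      show "x * y \<in> ideal_prod I J" using \<open>x \<in> I\<close> \<open>y \<in> J\<close> by (rule prod_mem)
      fix r assume "r \<in> R"
      then have "r * y \<in> J" using J \<open>y \<in> J\<close> by (simp add: rmodD(3))
      with \<open>x \<in> I\<close> have "x * (r * y) \<in> ideal_prod I J" by (rule prod_mem)
      then show "r * (x * y) \<in> ideal_prod I J" by (simp add: ac_simps)
    qed
  qed
  then show ?thesis unfolding rmod_def using prod_addcl by auto
qed

lemma prod_rmod_left: "rmod R I \<Longrightarrow> rmod R (ideal_prod I J)"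
  by (subst prod_comm) (rule prod_rmod)

lemma prod_unit: "1 \<in> R \<Longrightarrow> rmod R I \<Longrightarrow> ideal_prod R I = I"
proof
  assume a: "1 \<in> R" "rmod R I"
  show "ideal_prod R I \<subseteq> I"
  proof (rule prod_least)
    show "addcl I" using a(2) unfolding rmod_def by simp
    show "x * y \<in> I" if "x \<in> R" "y \<in> I" for x y using a(2) that by (simp add: rmodD(3))
  qed
  show "I \<subseteq> ideal_prod R I"
  proof
    fix x assume "x \<in> I"
    then have "1 * x \<in> ideal_prod R I" using a(1) by (intro prod_mem)
    then show "x \<in> ideal_prod R I" by simp
  qed
qed

lemma prod_unit': "1 \<in> R \<Longrightarrow> rmod R I \<Longrightarrow> ideal_prod I R = I"
  by (subst prod_comm) (rule prod_unit)

lemma prod_zero_set: "ideal_prod {0} J = {0}"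
proof
  show "ideal_prod {0} J \<subseteq> {0}" by (rule prod_least) (auto simp: addcl_def)
  show "{0} \<subseteq> ideal_prod {0} J" using prod_zero(1) by simp
qed

lemma prod_nonzero: "x \<in> I \<Longrightarrow> y \<in> J \<Longrightarrow> x \<noteq> 0 \<Longrightarrow> y \<noteq> 0 \<Longrightarrow> ideal_prod I J \<noteq> {0}"
proof
  assume "x \<in> I" "y \<in> J" "x \<noteq> 0" "y \<noteq> 0" "ideal_prod I J = {0}"
  then have "x * y \<in> {0}" using prod_mem[of x I y J] by simp
  then show False using \<open>x \<noteq> 0\<close> \<open>y \<noteq> 0\<close> by simp
qed

lemma rmod_sub: "rmod R' X \<Longrightarrow> R \<subseteq> R' \<Longrightarrow> rmod R X"
  unfolding rmod_def by (meson subsetD)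

lemma isum_mem: "x \<in> isum I J \<longleftrightarrow> (\<exists>u\<in>I. \<exists>v\<in>J. x = u + v)"
  unfolding isum_def by blast

lemma isum_memI: "u \<in> I \<Longrightarrow> v \<in> J \<Longrightarrow> u + v \<in> isum I J"
  unfolding isum_mem by blast

lemma isum_memE: assumes "x \<in> isum I J" obtains u v where "u \<in> I" "v \<in> J" "x = u + v"
  using assms unfolding isum_mem by blast

lemma isum_rmod: "rmod R I \<Longrightarrow> rmod R J \<Longrightarrow> rmod R (isum I J)"
proof -
  assume I: "rmod R I" and J: "rmod R J"
  have "0 + 0 \<in> isum I J" using rmodD(1)[OF I] rmodD(1)[OF J] by (rule isum_memI)
  then have z: "0 \<in> isum I J" by simp
  have a: "x + y \<in> isum I J" if hx: "x \<in> isum I J" and hy: "y \<in> isum I J" for x y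
  proof -
    obtain u v where uv: "u \<in> I" "v \<in> J" "x = u + v" using hx by (rule isum_memE)
    obtain u' v' where uv': "u' \<in> I" "v' \<in> J" "y = u' + v'" using hy by (rule isum_memE)
    have "(u + u') + (v + v') \<in> isum I J"
      using rmodD(2)[OF I uv(1) uv'(1)] rmodD(2)[OF J uv(2) uv'(2)] by (rule isum_memI)
    moreover have "x + y = (u + u') + (v + v')" using uv uv' by (simp add: algebra_simps)
    ultimately show ?thesis by simp
  qed
  have m: "r * x \<in> isum I J" if hr: "r \<in> R" and hx: "x \<in> isum I J" for r x
  proof -
    obtain u v where uv: "u \<in> I" "v \<in> J" "x = u + v" using hx by (rule isum_memE)
    have "r * u + r * v \<in> isum I J"
      using rmodD(3)[OF I hr uv(1)] rmodD(3)[OF J hr uv(2)] by (rule isum_memI)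
    moreover have "r * x = r * u + r * v" using uv by (simp add: algebra_simps)
    ultimately show ?thesis by simp
  qed
  show ?thesis unfolding rmod_def addcl_def using z a m by simp
qed

lemma principal_mem: "x \<in> R \<Longrightarrow> a * x \<in> principal R a"
  unfolding principal_def by blast

lemma principal_memE: assumes "z \<in> principal R a" obtains x where "x \<in> R" "z = a * x"
  using assms unfolding principal_def by blast



locale ord =
  fixes F R :: "complex set"
  assumes ord: "order_of F R"
begin

lemma nf: "number_field F" using ord unfolding order_of_def by simp
lemma F1: "1 \<in> F" using nf unfolding number_field_def subring_of_def by simp
lemma Fadd: "x \<in> F \<Longrightarrow> y \<in> F \<Longrightarrow> x + y \<in> F" using nf unfolding number_field_def subring_of_def by simp
lemma Fdiff: "x \<in> F \<Longrightarrow> y \<in> F \<Longrightarrow> x - y \<in> F" using nf unfolding number_field_def subring_of_def by simp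
lemma Fmult: "x \<in> F \<Longrightarrow> y \<in> F \<Longrightarrow> x * y \<in> F" using nf unfolding number_field_def subring_of_def by simp
lemma Finv: "x \<in> F \<Longrightarrow> inverse x \<in> F"
  using nf unfolding number_field_def by (cases "x = 0") auto
lemma F0: "0 \<in> F" using Fdiff[OF F1 F1] by simp
lemma Fdiv: "x \<in> F \<Longrightarrow> y \<in> F \<Longrightarrow> x / y \<in> F" using Fmult Finv by (simp add: divide_inverse)

lemma RF: "R \<subseteq> F" using ord unfolding order_of_def by simp
lemma R1: "1 \<in> R" using ord unfolding order_of_def subring_of_def by simp
lemma Radd: "x \<in> R \<Longrightarrow> y \<in> R \<Longrightarrow> x + y \<in> R" using ord unfolding order_of_def subring_of_def by simp
lemma Rdiff: "x \<in> R \<Longrightarrow> y \<in> R \<Longrightarrow> x - y \<in> R" using ord unfolding order_of_def subring_of_def by simp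
lemma Rmult: "x \<in> R \<Longrightarrow> y \<in> R \<Longrightarrow> x * y \<in> R" using ord unfolding order_of_def subring_of_def by simp
lemma R0: "0 \<in> R" using Rdiff[OF R1 R1] by simp
lemma Rneg: "x \<in> R \<Longrightarrow> - x \<in> R" using Rdiff[OF R0, of x] by simp
lemma RinF: "x \<in> R \<Longrightarrow> x \<in> F" using RF by blast

lemma denom: "x \<in> F \<Longrightarrow> \<exists>n::nat. n > 0 \<and> of_nat n * x \<in> R"
  using ord unfolding order_of_def by simp

lemma Rnat: "(of_nat n :: complex) \<in> R"
  by (induction n) (simp_all add: R0 Radd R1)

lemma addcl_R: "addcl R" unfolding addcl_def using R0 Radd by simp
lemma rmod_R: "rmod R R" unfolding rmod_def using addcl_R Rmult by simp
lemma addcl_F: "addcl F" unfolding addcl_def using F0 Fadd by simp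

lemma frac_iff: "frac_ideal F R I \<longleftrightarrow> I \<subseteq> F \<and> rmod R I \<and> I \<noteq> {0} \<and> (\<exists>d\<in>R. d \<noteq> 0 \<and> (\<forall>x\<in>I. d * x \<in> R))"
  unfolding frac_ideal_def submodule_of_def rmod_def addcl_def by auto

lemma ideal_iff: "ideal_of R I \<longleftrightarrow> I \<subseteq> R \<and> rmod R I"
  unfolding ideal_of_def submodule_of_def rmod_def addcl_def by auto

lemma frac_rmod: "frac_ideal F R I \<Longrightarrow> rmod R I" using frac_iff by simp
lemma frac_F: "frac_ideal F R I \<Longrightarrow> I \<subseteq> F" using frac_iff by simp
lemma frac_nz: "frac_ideal F R I \<Longrightarrow> \<exists>x\<in>I. x \<noteq> 0"
proof -
  assume "frac_ideal F R I"
  then have "I \<noteq> {0}" "0 \<in> I" using frac_iff rmodD(1) by auto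
  then show ?thesis by blast
qed

lemma prod_F: "I \<subseteq> F \<Longrightarrow> J \<subseteq> F \<Longrightarrow> ideal_prod I J \<subseteq> F"
  by (rule prod_least[OF addcl_F]) (auto intro: Fmult)

lemma prod_R: "I \<subseteq> R \<Longrightarrow> J \<subseteq> R \<Longrightarrow> ideal_prod I J \<subseteq> R"
  by (rule prod_least[OF addcl_R]) (auto intro: Rmult)

lemma RR: "ideal_prod R R = R" by (rule prod_unit[OF R1 rmod_R])

lemma prod_frac:
  assumes I: "frac_ideal F R I" and J: "frac_ideal F R J"
  shows "frac_ideal F R (ideal_prod I J)"
proof -
  obtain d1 where d1: "d1 \<in> R" "d1 \<noteq> 0" "\<forall>x\<in>I. d1 * x \<in> R" using I frac_iff by auto
  obtain d2 where d2: "d2 \<in> R" "d2 \<noteq> 0" "\<forall>x\<in>J. d2 * x \<in> R" using J frac_iff by auto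
  obtain x y where xy: "x \<in> I" "x \<noteq> 0" "y \<in> J" "y \<noteq> 0" using frac_nz I J by blast
  have nz: "ideal_prod I J \<noteq> {0}" by (rule prod_nonzero[OF xy(1,3,2,4)])
  have "addcl {z. d1 * d2 * z \<in> R}"
    unfolding addcl_def using R0 Radd by (auto simp: distrib_left)
  then have "ideal_prod I J \<subseteq> {z. d1 * d2 * z \<in> R}"
  proof (rule prod_least)
    fix x y assume "x \<in> I" "y \<in> J"
    then have "(d1 * x) * (d2 * y) \<in> R" using d1 d2 Rmult by simp
    then show "x * y \<in> {z. d1 * d2 * z \<in> R}" by (simp add: ac_simps)
  qed
  moreover have "d1 * d2 \<in> R" "d1 * d2 \<noteq> 0" using d1 d2 Rmult by auto
  ultimately show ?thesis unfolding frac_iff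
    using prod_F frac_F[OF I] frac_F[OF J] prod_rmod frac_rmod[OF J] nz by blast
qed

lemma inv_unique:
  assumes I: "invertible_frac F R I" and J: "frac_ideal F R J" and IJ: "ideal_prod I J = R"
  shows "J = iinv F R I"
proof
  show "J \<subseteq> iinv F R I"
  proof
    fix x assume x: "x \<in> J"
    have "\<forall>y\<in>I. x * y \<in> R"
    proof
      fix y assume "y \<in> I"
      then have "y * x \<in> R" using prod_mem[OF _ x] IJ by blast
      then show "x * y \<in> R" by (simp add: mult.commute)
    qed
    then show "x \<in> iinv F R I" unfolding iinv_def using x frac_F[OF J] by blast
  qed
  show "iinv F R I \<subseteq> J"
  proof
    fix x assume x: "x \<in> iinv F R I"
    then have xI: "\<forall>y\<in>I. x * y \<in> R" unfolding iinv_def by simp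
    have "addcl {z. x * z \<in> J}"
      unfolding addcl_def using rmodD(1,2)[OF frac_rmod[OF J]] by (auto simp: distrib_left)
    then have "ideal_prod I J \<subseteq> {z. x * z \<in> J}"
    proof (rule prod_least)
      fix y j assume "y \<in> I" "j \<in> J"
      then have "(x * y) * j \<in> J" using xI rmodD(3)[OF frac_rmod[OF J]] by simp
      then show "y * j \<in> {z. x * z \<in> J}" by (simp add: ac_simps)
    qed
    then have "x * 1 \<in> J" using IJ R1 by blast
    then show "x \<in> J" by simp
  qed
qed

lemma inv_props:
  assumes I: "invertible_frac F R I"
  shows "frac_ideal F R (iinv F R I)" "ideal_prod I (iinv F R I) = R"
    "invertible_frac F R (iinv F R I)" "iinv F R (iinv F R I) = I"
proof -
  obtain J where J: "frac_ideal F R J" "ideal_prod I J = R" using I invertible_frac_def by auto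
  then have e: "J = iinv F R I" using inv_unique[OF I] by simp
  show "frac_ideal F R (iinv F R I)" "ideal_prod I (iinv F R I) = R" using J e by auto
  have fI: "frac_ideal F R I" using I invertible_frac_def by auto
  have JI: "ideal_prod J I = R" using J(2) prod_comm by metis
  show inv: "invertible_frac F R (iinv F R I)" unfolding invertible_frac_def
    using J e fI JI by auto
  show "iinv F R (iinv F R I) = I" using inv_unique[OF inv fI] JI e by simp
qed

lemma inv_frac: "invertible_frac F R I \<Longrightarrow> frac_ideal F R I"
  unfolding invertible_frac_def by simp

lemma prod_inv:
  assumes I: "invertible_frac F R I" and J: "invertible_frac F R J"
  shows "invertible_frac F R (ideal_prod I J)"
    "iinv F R (ideal_prod I J) = ideal_prod (iinv F R I) (iinv F R J)"
proof -
  have e: "ideal_prod (ideal_prod I J) (ideal_prod (iinv F R I) (iinv F R J)) = R"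
  proof -
    have "ideal_prod (ideal_prod I J) (ideal_prod (iinv F R I) (iinv F R J))
        = ideal_prod (ideal_prod I (iinv F R I)) (ideal_prod J (iinv F R J))"
      by (simp add: ac_simps)
    also have "\<dots> = R" using inv_props(2)[OF I] inv_props(2)[OF J] RR by simp
    finally show ?thesis .
  qed
  have f: "frac_ideal F R (ideal_prod (iinv F R I) (iinv F R J))"
    using prod_frac inv_props(1) I J by blast
  show inv: "invertible_frac F R (ideal_prod I J)" unfolding invertible_frac_def
    using prod_frac[OF inv_frac[OF I] inv_frac[OF J]] e f by blast
  show "iinv F R (ideal_prod I J) = ideal_prod (iinv F R I) (iinv F R J)"
    using inv_unique[OF inv f e] by simp
qed

lemma R_frac: "frac_ideal F R R"
  unfolding frac_iff using RF rmod_R R1 Rmult by (intro conjI bexI[of _ 1]) auto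

lemma R_inv: "invertible_frac F R R" "iinv F R R = R"
proof -
  show i: "invertible_frac F R R" unfolding invertible_frac_def using R_frac RR by blast
  show "iinv F R R = R" using inv_unique[OF i R_frac RR] by simp
qed

lemma principal_rmod: "rmod R (principal R a)"
proof -
  have "a * 0 \<in> principal R a" using R0 by (rule principal_mem)
  then have z: "0 \<in> principal R a" by simp
  have p: "x + y \<in> principal R a" if hx: "x \<in> principal R a" and hy: "y \<in> principal R a" for x y
  proof -
    obtain r where r: "r \<in> R" "x = a * r" using hx by (rule principal_memE)
    obtain s where s: "s \<in> R" "y = a * s" using hy by (rule principal_memE)
    have "a * (r + s) \<in> principal R a" using Radd[OF r(1) s(1)] by (rule principal_mem)
    then show ?thesis using r s by (simp add: distrib_left)
  qed
  have m: "t * x \<in> principal R a" if ht: "t \<in> R" and hx: "x \<in> principal R a" for t x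
  proof -
    obtain r where r: "r \<in> R" "x = a * r" using hx by (rule principal_memE)
    have "a * (t * r) \<in> principal R a" using Rmult[OF ht r(1)] by (rule principal_mem)
    then show ?thesis using r by (simp add: ac_simps)
  qed
  show ?thesis unfolding rmod_def addcl_def using z p m by simp
qed

lemma principal_prod: "ideal_prod (principal R a) (principal R b) = principal R (a * b)"
proof
  have "addcl (principal R (a * b))" using principal_rmod rmod_def by simp
  then show "ideal_prod (principal R a) (principal R b) \<subseteq> principal R (a * b)"
  proof (rule prod_least)
    fix x y assume "x \<in> principal R a" "y \<in> principal R b"
    obtain r where "r \<in> R" "x = a * r" using \<open>x \<in> principal R a\<close> by (rule principal_memE)
    moreover obtain s where "s \<in> R" "y = b * s" using \<open>y \<in> principal R b\<close> by (rule principal_memE)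
    ultimately show "x * y \<in> principal R (a * b)"
      using principal_mem[of "r * s" R "a * b"] Rmult by (simp add: ac_simps)
  qed
  show "principal R (a * b) \<subseteq> ideal_prod (principal R a) (principal R b)"
  proof
    fix z assume "z \<in> principal R (a * b)"
    then obtain r where "r \<in> R" "z = a * b * r" by (rule principal_memE)
    have "(a * r) * (b * 1) \<in> ideal_prod (principal R a) (principal R b)"
      using principal_mem[OF \<open>r \<in> R\<close>, of a] principal_mem[OF R1, of b] by (rule prod_mem)
    then show "z \<in> ideal_prod (principal R a) (principal R b)" using \<open>z = _\<close> by (simp add: ac_simps)
  qed
qed

lemma principal_one: "principal R 1 = R"
proof
  show "principal R 1 \<subseteq> R" by (auto elim: principal_memE)
  show "R \<subseteq> principal R 1" using principal_mem[of _ R 1] by auto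
qed

lemma principal_frac:
  assumes "a \<in> F" "a \<noteq> 0" shows "frac_ideal F R (principal R a)"
proof -
  obtain n :: nat where n: "n > 0" "of_nat n * a \<in> R" using denom assms by blast
  have "principal R a \<subseteq> F" using assms RF Fmult by (auto elim!: principal_memE)
  moreover have "principal R a \<noteq> {0}" using principal_mem[OF R1, of a] assms by auto
  moreover have "\<forall>x\<in>principal R a. of_nat n * x \<in> R"
  proof
    fix x assume "x \<in> principal R a"
    then obtain r where r: "r \<in> R" "x = a * r" by (auto elim!: principal_memE)
    have eq: "of_nat n * x = (of_nat n * a) * r" using r(2) by (simp add: mult.assoc)
    show "of_nat n * x \<in> R" using Rmult[OF n(2) r(1)] by (simp only: eq)
  qed
  ultimately show ?thesis unfolding frac_iff using principal_rmod Rnat n(1)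
    by (intro conjI bexI[of _ "of_nat n"]) auto
qed

lemma principal_inv:
  assumes "a \<in> F" "a \<noteq> 0"
  shows "invertible_frac F R (principal R a)" "iinv F R (principal R a) = principal R (inverse a)"
proof -
  have e: "ideal_prod (principal R a) (principal R (inverse a)) = R"
    using principal_prod principal_one assms by simp
  have f: "frac_ideal F R (principal R (inverse a))" using principal_frac Finv assms by simp
  show i: "invertible_frac F R (principal R a)" unfolding invertible_frac_def
    using principal_frac[OF assms] f e by blast
  show "iinv F R (principal R a) = principal R (inverse a)" using inv_unique[OF i f e] by simp
qed

end


lemma Jgrp_simps [simp]: "carrier (Jgrp F R m) = Jstar F R m"
  "mult (Jgrp F R m) = ideal_prod" "one (Jgrp F R m) = R"
  unfolding Jgrp_def by simp_all

locale ordm = ord +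
  fixes m assumes mI: "ideal_of R m"
begin

lemma mR: "m \<subseteq> R" using mI ideal_iff by simp
lemma m_rmod: "rmod R m" using mI ideal_iff by simp
lemma m0: "0 \<in> m" using rmodD(1)[OF m_rmod] .
lemma madd: "x \<in> m \<Longrightarrow> y \<in> m \<Longrightarrow> x + y \<in> m" using rmodD(2)[OF m_rmod] .
lemma mmul: "r \<in> R \<Longrightarrow> x \<in> m \<Longrightarrow> r * x \<in> m" using rmodD(3)[OF m_rmod] .
lemma mmul': "r \<in> R \<Longrightarrow> x \<in> m \<Longrightarrow> x * r \<in> m" using mmul by (simp add: mult.commute)
lemma mneg: "x \<in> m \<Longrightarrow> - x \<in> m" using mmul[OF Rneg[OF R1]] by simp
lemma mdiff: "x \<in> m \<Longrightarrow> y \<in> m \<Longrightarrow> x - y \<in> m" using madd[OF _ mneg] by simp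

lemma coprime_iff: "coprime_int R m a \<longleftrightarrow> ideal_of R a \<and> (\<exists>x\<in>a. \<exists>y\<in>m. x + y = 1)"
proof
  assume c: "coprime_int R m a"
  then have "1 \<in> isum a m" using R1 unfolding coprime_int_def by simp
  then obtain u v where "u \<in> a" "v \<in> m" "1 = u + v" by (rule isum_memE)
  then show "ideal_of R a \<and> (\<exists>x\<in>a. \<exists>y\<in>m. x + y = 1)" using c unfolding coprime_int_def by auto
next
  assume a: "ideal_of R a \<and> (\<exists>x\<in>a. \<exists>y\<in>m. x + y = 1)"
  then obtain x y where xy: "x \<in> a" "y \<in> m" "x + y = 1" by blast
  have aR: "a \<subseteq> R" "rmod R a" using a ideal_iff by auto
  have "isum a m \<subseteq> R"
  proof
    fix z assume "z \<in> isum a m"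
    then obtain u v where "u \<in> a" "v \<in> m" "z = u + v" by (rule isum_memE)
    then show "z \<in> R" using aR mR Radd by blast
  qed
  moreover have "R \<subseteq> isum a m"
  proof
    fix r assume r: "r \<in> R"
    have "r * x + r * y \<in> isum a m" using rmodD(3)[OF aR(2) r xy(1)] mmul[OF r xy(2)] by (rule isum_memI)
    then show "r \<in> isum a m" using xy(3) by (simp add: distrib_left[symmetric])
  qed
  ultimately show "coprime_int R m a" unfolding coprime_int_def using a by blast
qed

lemma coprimeI: "ideal_of R a \<Longrightarrow> x \<in> a \<Longrightarrow> y \<in> m \<Longrightarrow> x + y = 1 \<Longrightarrow> coprime_int R m a"
  using coprime_iff by blast

lemma coprime_ideal: "coprime_int R m a \<Longrightarrow> ideal_of R a"
  unfolding coprime_int_def by simp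

lemma coprime_prod:
  assumes a: "coprime_int R m a" and b: "coprime_int R m b"
  shows "coprime_int R m (ideal_prod a b)"
proof -
  obtain x y where xy: "x \<in> a" "y \<in> m" "x + y = 1" using a coprime_iff by blast
  obtain x' y' where xy': "x' \<in> b" "y' \<in> m" "x' + y' = 1" using b coprime_iff by blast
  have ia: "a \<subseteq> R" "rmod R a" and ib: "b \<subseteq> R" "rmod R b" using a b coprime_ideal ideal_iff by auto
  have id: "ideal_of R (ideal_prod a b)" unfolding ideal_iff using prod_R ia ib prod_rmod by blast
  have "x * x' \<in> ideal_prod a b" using xy(1) xy'(1) by (rule prod_mem)
  moreover have "x * y' + y * x' + y * y' \<in> m"
  proof -
    have "x \<in> R" "x' \<in> R" using xy(1) xy'(1) ia ib by auto
    then have "x * y' \<in> m" "y * x' \<in> m" "y * y' \<in> m"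
      using mmul[OF _ xy'(2)] mmul'[OF _ xy(2)] mR xy'(2) by auto
    then show ?thesis using madd by simp
  qed
  moreover have "x * x' + (x * y' + y * x' + y * y') = 1"
  proof -
    have "(x + y) * (x' + y') = 1" using xy xy' by simp
    then show ?thesis by (simp add: algebra_simps)
  qed
  ultimately show ?thesis using coprimeI[OF id] by blast
qed

lemma coprime_R: "coprime_int R m R"
  using coprimeI[of R 1 0] ideal_iff rmod_R R1 m0 by simp

lemma ideal_frac: "ideal_of R a \<Longrightarrow> a \<noteq> {0} \<Longrightarrow> frac_ideal F R a"
  unfolding frac_iff ideal_iff using RF R1 by (intro conjI bexI[of _ 1]) auto

lemma Jstar_iff: "I \<in> Jstar F R m \<longleftrightarrow> invertible_frac F R I \<and> coprime_frac F R m I"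
  unfolding Jstar_def by simp

lemma R_Jstar: "R \<in> Jstar F R m"
  unfolding Jstar_iff coprime_frac_def using R_inv coprime_R RR
  by (intro conjI exI[of _ R]) auto

lemma Jstar_rmod: "I \<in> Jstar F R m \<Longrightarrow> rmod R I"
  using Jstar_iff inv_frac frac_rmod by blast

lemma Jstar_mult:
  assumes I: "I \<in> Jstar F R m" and J: "J \<in> Jstar F R m"
  shows "ideal_prod I J \<in> Jstar F R m"
proof -
  obtain a b where ab: "coprime_int R m a" "coprime_int R m b" "invertible_frac F R b" "I = ideal_prod a (iinv F R b)"
    using I unfolding Jstar_iff coprime_frac_def by blast
  obtain c d where cd: "coprime_int R m c" "coprime_int R m d" "invertible_frac F R d" "J = ideal_prod c (iinv F R d)"
    using J unfolding Jstar_iff coprime_frac_def by blast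
  have "ideal_prod I J = ideal_prod (ideal_prod a c) (ideal_prod (iinv F R b) (iinv F R d))"
    using ab(4) cd(4) by (simp add: ac_simps)
  also have "\<dots> = ideal_prod (ideal_prod a c) (iinv F R (ideal_prod b d))"
    using prod_inv(2)[OF ab(3) cd(3)] by simp
  finally have "coprime_frac F R m (ideal_prod I J)" unfolding coprime_frac_def
    using coprime_prod ab cd prod_inv(1)[OF ab(3) cd(3)] by blast
  moreover have "invertible_frac F R (ideal_prod I J)" using prod_inv(1) I J Jstar_iff by blast
  ultimately show ?thesis using Jstar_iff by blast
qed

lemma Jstar_inv:
  assumes I: "I \<in> Jstar F R m"
  shows "iinv F R I \<in> Jstar F R m" "ideal_prod (iinv F R I) I = R"
proof -
  obtain a b where ab: "coprime_int R m a" "coprime_int R m b" "invertible_frac F R b" "I = ideal_prod a (iinv F R b)"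
    using I unfolding Jstar_iff coprime_frac_def by blast
  have Ii: "invertible_frac F R I" using I Jstar_iff by blast
  have ar: "rmod R a" using ab(1) coprime_ideal ideal_iff by blast
  have "ideal_prod I b = ideal_prod a (ideal_prod b (iinv F R b))" using ab(4) by (simp add: ac_simps)
  also have "\<dots> = a" using inv_props(2)[OF ab(3)] prod_unit'[OF R1 ar] by simp
  finally have aI: "a = ideal_prod I b" by simp
  then have ai: "invertible_frac F R a" using prod_inv(1)[OF Ii ab(3)] by simp
  define y where "y = ideal_prod b (iinv F R a)"
  have "ideal_prod I y = ideal_prod (ideal_prod a (iinv F R a)) (ideal_prod b (iinv F R b))"
    unfolding y_def ab(4) by (simp add: ac_simps)
  also have "\<dots> = R" using inv_props(2)[OF ai] inv_props(2)[OF ab(3)] RR by simp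
  finally have Iy: "ideal_prod I y = R" .
  have fy: "frac_ideal F R y" unfolding y_def using prod_frac inv_frac[OF ab(3)] inv_props(1)[OF ai] by blast
  have ye: "y = iinv F R I" using inv_unique[OF Ii fy Iy] .
  show "iinv F R I \<in> Jstar F R m" unfolding Jstar_iff coprime_frac_def
    using inv_props(3)[OF Ii] ab(1,2) ai ye y_def by blast
  show "ideal_prod (iinv F R I) I = R" using Iy ye prod_comm by metis
qed

lemma Jgrp_comm_group: "comm_group (Jgrp F R m)"
proof (rule comm_groupI, simp_all)
  show "\<And>x y. x \<in> Jstar F R m \<Longrightarrow> y \<in> Jstar F R m \<Longrightarrow> ideal_prod x y \<in> Jstar F R m"
    by (rule Jstar_mult)
  show "R \<in> Jstar F R m" by (rule R_Jstar)
  show "\<And>x y z. ideal_prod (ideal_prod x y) z = ideal_prod x (ideal_prod y z)" by (rule prod_assoc)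
  show "\<And>x y. ideal_prod x y = ideal_prod y x" by (rule prod_comm)
  show "\<And>x. x \<in> Jstar F R m \<Longrightarrow> ideal_prod R x = x" using prod_unit[OF R1] Jstar_rmod by blast
  show "\<And>x. x \<in> Jstar F R m \<Longrightarrow> \<exists>y\<in>Jstar F R m. ideal_prod y x = R" using Jstar_inv by blast
qed

end


lemma emb_inv:
  assumes "real_embedding F \<rho>" "x \<in> F" "y \<in> F" "x * y = 1"
  shows "\<rho> x * \<rho> y = 1"
  using assms unfolding real_embedding_def by metis

lemma emb_mult: "real_embedding F \<rho> \<Longrightarrow> x \<in> F \<Longrightarrow> y \<in> F \<Longrightarrow> \<rho> (x * y) = \<rho> x * \<rho> y"
  unfolding real_embedding_def by blast

context ordm begin

lemma principal_sub: "a \<in> R \<Longrightarrow> principal R a \<subseteq> R"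
  using Rmult by (auto elim!: principal_memE)

lemma principal_ideal: "a \<in> R \<Longrightarrow> ideal_of R (principal R a)"
  unfolding ideal_iff using principal_sub principal_rmod by blast

lemma principal_coprime:
  assumes a: "a \<in> R"
  shows "isum (principal R a) m = R \<longleftrightarrow> (\<exists>r\<in>R. \<exists>y\<in>m. a * r + y = 1)"
proof -
  have "isum (principal R a) m = R \<longleftrightarrow> coprime_int R m (principal R a)"
    unfolding coprime_int_def using principal_ideal[OF a] by simp
  also have "\<dots> \<longleftrightarrow> (\<exists>x\<in>principal R a. \<exists>y\<in>m. x + y = 1)"
    using coprime_iff principal_ideal[OF a] by simp
  also have "\<dots> \<longleftrightarrow> (\<exists>r\<in>R. \<exists>y\<in>m. a * r + y = 1)"
    unfolding principal_def by blast
  finally show ?thesis .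
qed

lemma pc_mult:
  assumes a: "a \<in> R" and b: "b \<in> R"
    and "\<exists>r\<in>R. \<exists>y\<in>m. a * r + y = 1" "\<exists>r\<in>R. \<exists>y\<in>m. b * r + y = 1"
  shows "\<exists>r\<in>R. \<exists>y\<in>m. (a * b) * r + y = 1"
proof -
  obtain r y where ry: "r \<in> R" "y \<in> m" "a * r + y = 1" using assms(3) by blast
  obtain s z where sz: "s \<in> R" "z \<in> m" "b * s + z = 1" using assms(4) by blast
  have "(a * r) * z \<in> m" "y * (b * s) \<in> m" "y * z \<in> m"
    using mmul mmul' Rmult a b ry sz mR by auto
  then have "(a * r) * z + y * (b * s) + y * z \<in> m" using madd by simp
  moreover have "(a * b) * (r * s) + ((a * r) * z + y * (b * s) + y * z) = 1"
  proof -
    have "(a * r + y) * (b * s + z) = 1" using ry sz by simp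
    then show ?thesis by (simp add: algebra_simps)
  qed
  ultimately show ?thesis using Rmult[OF ry(1) sz(1)] by blast
qed

lemma cong1_mult:
  assumes "cong1 R m \<alpha>" "cong1 R m \<beta>" shows "cong1 R m (\<alpha> * \<beta>)"
proof -
  obtain a b where ab: "a \<in> R" "b \<in> R" "b \<noteq> 0" "\<alpha> = a / b" "isum (principal R a) m = R"
    "isum (principal R b) m = R" "a - b \<in> m" using assms(1) unfolding cong1_def by blast
  obtain c d where cd: "c \<in> R" "d \<in> R" "d \<noteq> 0" "\<beta> = c / d" "isum (principal R c) m = R"
    "isum (principal R d) m = R" "c - d \<in> m" using assms(2) unfolding cong1_def by blast
  have "a * c \<in> R" "b * d \<in> R" "b * d \<noteq> 0" "\<alpha> * \<beta> = (a * c) / (b * d)"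
    using ab cd Rmult by auto
  moreover have "isum (principal R (a * c)) m = R" "isum (principal R (b * d)) m = R"
    using principal_coprime pc_mult ab cd Rmult by auto
  moreover have "a * c - b * d \<in> m"
  proof -
    have "a * (c - d) \<in> m" "(a - b) * d \<in> m" using mmul mmul' ab cd by auto
    then have "a * (c - d) + (a - b) * d \<in> m" using madd by simp
    then show ?thesis by (simp add: algebra_simps)
  qed
  ultimately show ?thesis unfolding cong1_def by blast
qed

lemma cong1_inv:
  assumes "cong1 R m \<alpha>" "\<alpha> \<noteq> 0" shows "cong1 R m (inverse \<alpha>)"
proof -
  obtain a b where ab: "a \<in> R" "b \<in> R" "b \<noteq> 0" "\<alpha> = a / b" "isum (principal R a) m = R"
    "isum (principal R b) m = R" "a - b \<in> m" using assms(1) unfolding cong1_def by blast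
  have "a \<noteq> 0" using ab assms(2) by auto
  moreover have "inverse \<alpha> = b / a" using ab by simp
  moreover have "b - a \<in> m" using mneg[OF ab(7)] by simp
  ultimately show ?thesis unfolding cong1_def using ab by blast
qed

lemma cong1_one: "cong1 R m 1"
  unfolding cong1_def using R1 principal_one coprime_R unfolding coprime_int_def
  by (intro bexI[of _ 1]) (auto simp: m0)

lemma Pms_Jstar: "Pms F R m S \<subseteq> Jstar F R m"
proof
  fix p assume "p \<in> Pms F R m S"
  then obtain \<alpha> where al: "p = principal R \<alpha>" "\<alpha> \<in> F" "\<alpha> \<noteq> 0" "cong1 R m \<alpha>"
    unfolding Pms_def by blast
  obtain a b where ab: "a \<in> R" "b \<in> R" "b \<noteq> 0" "\<alpha> = a / b" "isum (principal R a) m = R"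
    "isum (principal R b) m = R" "a - b \<in> m" using al(4) unfolding cong1_def by blast
  have bF: "b \<in> F" using ab RF by blast
  have "p = ideal_prod (principal R a) (principal R (inverse b))"
    using al(1) ab(4) principal_prod by (simp add: divide_inverse)
  also have "\<dots> = ideal_prod (principal R a) (iinv F R (principal R b))"
    using principal_inv(2)[OF bF ab(3)] by simp
  finally have "coprime_frac F R m p" unfolding coprime_frac_def coprime_int_def
    using principal_ideal ab principal_inv(1)[OF bF ab(3)] by blast
  then show "p \<in> Jstar F R m" unfolding Jstar_iff using principal_inv(1) al by simp
qed

lemma Pms_subgroup:
  assumes S: "\<forall>\<rho>\<in>S. real_embedding F \<rho>"
  shows "subgroup (Pms F R m S) (Jgrp F R m)"
proof -
  interpret G: comm_group "Jgrp F R m" by (rule Jgrp_comm_group)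
  show ?thesis
  proof (rule G.subgroupI)
    show "Pms F R m S \<subseteq> carrier (Jgrp F R m)" using Pms_Jstar by simp
    have "R = principal R 1" using principal_one by simp
    moreover have "\<forall>\<rho>\<in>S. \<rho> 1 > 0" using S unfolding real_embedding_def by auto
    ultimately have "R \<in> Pms F R m S" unfolding Pms_def using cong1_one F1 by auto
    then show "Pms F R m S \<noteq> {}" by blast
  next
    fix p assume p: "p \<in> Pms F R m S"
    then obtain \<alpha> where al: "p = principal R \<alpha>" "\<alpha> \<in> F" "\<alpha> \<noteq> 0" "cong1 R m \<alpha>" "\<forall>\<rho>\<in>S. \<rho> \<alpha> > 0"
      unfolding Pms_def by blast
    have pos: "\<forall>\<rho>\<in>S. \<rho> (inverse \<alpha>) > 0"
    proof
      fix \<rho> assume "\<rho> \<in> S"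
      then have "\<rho> \<alpha> * \<rho> (inverse \<alpha>) = 1" "\<rho> \<alpha> > 0"
        using emb_inv[of F \<rho> \<alpha> "inverse \<alpha>"] S al Finv by auto
      then show "\<rho> (inverse \<alpha>) > 0" using zero_less_mult_iff[of "\<rho> \<alpha>" "\<rho> (inverse \<alpha>)"] by simp
    qed
    have q: "principal R (inverse \<alpha>) \<in> Pms F R m S" unfolding Pms_def
      using al Finv cong1_inv pos by auto
    have "ideal_prod (principal R (inverse \<alpha>)) p = R" using al principal_prod principal_one by simp
    then have "inv\<^bsub>Jgrp F R m\<^esub> p = principal R (inverse \<alpha>)"
      using G.inv_equality[of "principal R (inverse \<alpha>)" p] q p Pms_Jstar by auto
    then show "inv\<^bsub>Jgrp F R m\<^esub> p \<in> Pms F R m S" using q by simp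
  next
    fix p q assume p: "p \<in> Pms F R m S" and q: "q \<in> Pms F R m S"
    obtain \<alpha> where al: "p = principal R \<alpha>" "\<alpha> \<in> F" "\<alpha> \<noteq> 0" "cong1 R m \<alpha>" "\<forall>\<rho>\<in>S. \<rho> \<alpha> > 0"
      using p unfolding Pms_def by blast
    obtain \<beta> where be: "q = principal R \<beta>" "\<beta> \<in> F" "\<beta> \<noteq> 0" "cong1 R m \<beta>" "\<forall>\<rho>\<in>S. \<rho> \<beta> > 0"
      using q unfolding Pms_def by blast
    have "\<forall>\<rho>\<in>S. \<rho> (\<alpha> * \<beta>) > 0"
    proof
      fix \<rho> assume r: "\<rho> \<in> S"
      then have "\<rho> (\<alpha> * \<beta>) = \<rho> \<alpha> * \<rho> \<beta>" using emb_mult S al(2) be(2) by blast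
      then show "\<rho> (\<alpha> * \<beta>) > 0" using al(5) be(5) r by simp
    qed
    then show "p \<otimes>\<^bsub>Jgrp F R m\<^esub> q \<in> Pms F R m S" unfolding Pms_def
      using al be principal_prod Fmult cong1_mult by auto
  qed
qed

end


locale pair = A: ordm F R m + B: ordm F R' m for F R R' m +
  assumes sub: "R \<subseteq> R'"
begin

lemma ext_mult: "ideal_prod (ideal_prod X Y) R' = ideal_prod (ideal_prod X R') (ideal_prod Y R')"
proof -
  have "ideal_prod (ideal_prod X R') (ideal_prod Y R') = ideal_prod (ideal_prod X Y) (ideal_prod R' R')"
    by (simp add: ac_simps)
  then show ?thesis using B.RR by simp
qed

lemma ext_principal: "ideal_prod (principal R g) R' = principal R' g"
proof
  show "ideal_prod (principal R g) R' \<subseteq> principal R' g"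
  proof (rule prod_least)
    show "addcl (principal R' g)" using B.principal_rmod rmod_def by simp
    fix x y assume "x \<in> principal R g" "y \<in> R'"
    then obtain r where r: "r \<in> R" "x = g * r" by (auto elim: principal_memE)
    have "g * (r * y) \<in> principal R' g" using B.Rmult[OF _ \<open>y \<in> R'\<close>, of r] r(1) sub
      by (intro principal_mem) blast
    then show "x * y \<in> principal R' g" using r by (simp add: ac_simps)
  qed
  show "principal R' g \<subseteq> ideal_prod (principal R g) R'"
  proof
    fix z assume "z \<in> principal R' g"
    then obtain r where r: "r \<in> R'" "z = g * r" by (auto elim: principal_memE)
    have "(g * 1) * r \<in> ideal_prod (principal R g) R'"
      using principal_mem[OF A.R1, of g] r(1) by (rule prod_mem)
    then show "z \<in> ideal_prod (principal R g) R'" using r by simp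
  qed
qed

lemma ext_coprime:
  assumes "coprime_int R m a" shows "coprime_int R' m (ideal_prod a R')"
proof -
  obtain x y where xy: "x \<in> a" "y \<in> m" "x + y = 1" using assms A.coprime_iff by blast
  have a: "a \<subseteq> R" using assms A.coprime_ideal A.ideal_iff by blast
  have "ideal_prod a R' \<subseteq> R'" using a sub B.prod_R by blast
  moreover have "rmod R' (ideal_prod a R')" using B.rmod_R by (rule prod_rmod)
  ultimately have i: "ideal_of R' (ideal_prod a R')" using B.ideal_iff by blast
  have "x * 1 \<in> ideal_prod a R'" using xy(1) B.R1 by (rule prod_mem)
  then show ?thesis using B.coprimeI[OF i _ xy(2,3)] by simp
qed

lemma ext_frac:
  assumes X: "frac_ideal F R X" shows "frac_ideal F R' (ideal_prod X R')"
proof -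
  obtain d where d: "d \<in> R" "d \<noteq> 0" "\<forall>x\<in>X. d * x \<in> R" using X A.frac_iff by blast
  obtain x where x: "x \<in> X" "x \<noteq> 0" using A.frac_nz[OF X] by blast
  have "x * 1 \<in> ideal_prod X R'" using x(1) B.R1 by (rule prod_mem)
  then have nz: "ideal_prod X R' \<noteq> {0}" using x(2) by auto
  have F: "ideal_prod X R' \<subseteq> F" using A.prod_F A.frac_F[OF X] B.RF by blast
  have rm: "rmod R' (ideal_prod X R')" using B.rmod_R by (rule prod_rmod)
  have "addcl {z. d * z \<in> R'}" unfolding addcl_def using B.R0 B.Radd by (auto simp: distrib_left)
  then have "ideal_prod X R' \<subseteq> {z. d * z \<in> R'}"
  proof (rule prod_least)
    fix x y assume "x \<in> X" "y \<in> R'"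
    then have "d * x \<in> R'" using d sub by blast
    then have "(d * x) * y \<in> R'" using B.Rmult \<open>y \<in> R'\<close> by blast
    then show "x * y \<in> {z. d * z \<in> R'}" by (simp add: ac_simps)
  qed
  then show ?thesis unfolding B.frac_iff using F rm nz d sub by blast
qed

lemma ext_inv:
  assumes X: "invertible_frac F R X"
  shows "invertible_frac F R' (ideal_prod X R')"
    "iinv F R' (ideal_prod X R') = ideal_prod (iinv F R X) R'"
proof -
  have e: "ideal_prod (ideal_prod X R') (ideal_prod (iinv F R X) R') = R'"
    using ext_mult[symmetric] A.inv_props(2)[OF X] B.RR sub
    by (metis A.R1 B.rmod_R prod_unit rmod_sub)
  have f: "frac_ideal F R' (ideal_prod (iinv F R X) R')" using ext_frac A.inv_props(1)[OF X] by blast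
  show i: "invertible_frac F R' (ideal_prod X R')" unfolding invertible_frac_def
    using ext_frac[OF A.inv_frac[OF X]] f e by blast
  show "iinv F R' (ideal_prod X R') = ideal_prod (iinv F R X) R'"
    using B.inv_unique[OF i f e] by simp
qed

lemma ext_Jstar:
  assumes a: "a \<in> Jstar F R m" shows "ideal_prod a R' \<in> Jstar F R' m"
proof -
  obtain c d where cd: "coprime_int R m c" "coprime_int R m d" "invertible_frac F R d" "a = ideal_prod c (iinv F R d)"
    using a unfolding A.Jstar_iff coprime_frac_def by blast
  have "ideal_prod a R' = ideal_prod (ideal_prod c R') (ideal_prod (iinv F R d) R')"
    using cd(4) ext_mult by simp
  also have "\<dots> = ideal_prod (ideal_prod c R') (iinv F R' (ideal_prod d R'))"
    using ext_inv(2)[OF cd(3)] by simp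
  finally have "coprime_frac F R' m (ideal_prod a R')" unfolding coprime_frac_def
    using ext_coprime cd ext_inv(1)[OF cd(3)] by blast
  moreover have "invertible_frac F R' (ideal_prod a R')" using ext_inv(1) a A.Jstar_iff by blast
  ultimately show ?thesis using B.Jstar_iff by blast
qed

lemma ext_inj:
  assumes X: "coprime_int R m X" shows "ideal_prod X R' \<inter> R = X"
proof
  have Xi: "X \<subseteq> R" "rmod R X" using X A.coprime_ideal A.ideal_iff by blast+
  show "X \<subseteq> ideal_prod X R' \<inter> R"
  proof
    fix x assume "x \<in> X"
    then have "x * 1 \<in> ideal_prod X R'" using B.R1 by (rule prod_mem)
    then show "x \<in> ideal_prod X R' \<inter> R" using Xi \<open>x \<in> X\<close> by auto
  qed
  show "ideal_prod X R' \<inter> R \<subseteq> X"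
  proof
    fix z assume z: "z \<in> ideal_prod X R' \<inter> R"
    obtain x0 m0 where xm: "x0 \<in> X" "m0 \<in> m" "x0 + m0 = 1" using X A.coprime_iff by blast
    have "addcl {w. w * m0 \<in> X}" unfolding addcl_def using rmodD(1,2)[OF Xi(2)] by (auto simp: distrib_right)
    then have "ideal_prod X R' \<subseteq> {w. w * m0 \<in> X}"
    proof (rule prod_least)
      fix x y assume "x \<in> X" "y \<in> R'"
      then have "y * m0 \<in> m" using B.mmul xm(2) by blast
      then have "(y * m0) * x \<in> X" using rmodD(3)[OF Xi(2) _ \<open>x \<in> X\<close>] A.mR by blast
      then show "x * y \<in> {w. w * m0 \<in> X}" by (simp add: ac_simps)
    qed
    then have "z * m0 \<in> X" using z by blast
    moreover have "z * x0 \<in> X" using rmodD(3)[OF Xi(2) _ xm(1)] z by blast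
    ultimately have "z * x0 + z * m0 \<in> X" using rmodD(2)[OF Xi(2)] by blast
    then show "z \<in> X" using xm(3) by (simp add: distrib_left[symmetric])
  qed
qed

end


context ord begin
lemma cancel:
  assumes Z: "invertible_frac F R Z" and X: "rmod R X" and Y: "rmod R Y"
    and e: "ideal_prod X Z = ideal_prod Y Z"
  shows "X = Y"
proof -
  have "X = ideal_prod X (ideal_prod Z (iinv F R Z))" using inv_props(2)[OF Z] prod_unit'[OF R1 X] by simp
  also have "\<dots> = ideal_prod (ideal_prod X Z) (iinv F R Z)" by (simp add: ac_simps)
  also have "\<dots> = ideal_prod (ideal_prod Y Z) (iinv F R Z)" using e by simp
  also have "\<dots> = ideal_prod Y (ideal_prod Z (iinv F R Z))" by (simp add: ac_simps)
  also have "\<dots> = Y" using inv_props(2)[OF Z] prod_unit'[OF R1 Y] by simp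
  finally show ?thesis .
qed
end

context pair begin

lemma contract:
  assumes b: "coprime_int R' m b" and bi: "invertible_frac F R' b"
  shows "b \<inter> R \<in> Jstar F R m" "ideal_prod (b \<inter> R) R' = b"
proof -
  define a where "a = b \<inter> R"
  have bI: "b \<subseteq> R'" "rmod R' b" using b B.coprime_ideal B.ideal_iff by blast+
  have ar: "rmod R a"
  proof -
    have "0 \<in> a" using rmodD(1)[OF bI(2)] A.R0 a_def by simp
    moreover have "x + y \<in> a" if "x \<in> a" "y \<in> a" for x y
      using that rmodD(2)[OF bI(2)] A.Radd a_def by simp
    moreover have "r * x \<in> a" if "r \<in> R" "x \<in> a" for r x
    proof -
      have "r \<in> R'" using that(1) sub by blast
      then show ?thesis using that rmodD(3)[OF bI(2)] A.Rmult a_def by simp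
    qed
    ultimately show ?thesis unfolding rmod_def addcl_def by blast
  qed
  have aI: "ideal_of R a" unfolding A.ideal_iff using ar a_def by blast
  obtain b0 m0 where bm: "b0 \<in> b" "m0 \<in> m" "b0 + m0 = 1" using b B.coprime_iff by blast
  have m0R: "m0 \<in> R" using bm(2) A.mR by blast
  have "b0 = 1 - m0" using bm(3) by (simp add: algebra_simps eq_diff_eq)
  then have "b0 \<in> R" using A.Rdiff[OF A.R1 m0R] by simp
  then have b0a: "b0 \<in> a" using bm(1) a_def by blast
  have ac: "coprime_int R m a" using A.coprimeI[OF aI b0a bm(2,3)] .
  have ext: "ideal_prod a R' = b"
  proof
    show "ideal_prod a R' \<subseteq> b"
    proof (rule prod_least)
      show "addcl b" using bI(2) rmod_def by simp
      fix x y assume "x \<in> a" "y \<in> R'"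
      then have "y * x \<in> b" using rmodD(3)[OF bI(2)] a_def by blast
      then show "x * y \<in> b" by (simp add: mult.commute)
    qed
    show "b \<subseteq> ideal_prod a R'"
    proof
      fix z assume z: "z \<in> b"
      have zR': "z \<in> R'" using z bI(1) by blast
      have "b0 * z \<in> ideal_prod a R'" using b0a zR' by (rule prod_mem)
      moreover have "z * m0 \<in> a"
      proof -
        have "m0 * z \<in> b" using rmodD(3)[OF bI(2) _ z] bm(2) B.mR by blast
        moreover have "z * m0 \<in> m" using B.mmul[OF zR' bm(2)] .
        ultimately show ?thesis using A.mR a_def by (auto simp: mult.commute)
      qed
      then have "(z * m0) * 1 \<in> ideal_prod a R'" using B.R1 by (rule prod_mem)
      ultimately have "b0 * z + (z * m0) * 1 \<in> ideal_prod a R'" by (rule prod_zero(2))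
      moreover have "b0 * z + (z * m0) * 1 = z * (b0 + m0)" by (simp add: algebra_simps)
      ultimately show "z \<in> ideal_prod a R'" using bm(3) by simp
    qed
  qed
  have anz: "a \<noteq> {0}"
  proof
    assume "a = {0}"
    then have "b = {0}" using ext prod_zero_set by simp
    then show False using B.inv_frac[OF bi] B.frac_iff by blast
  qed
  have af: "frac_ideal F R a" using A.ideal_frac[OF aI anz] .
  define b' where "b' = iinv F R' b"
  define K where "K = ideal_prod m b'"
  have b'f: "frac_ideal F R' b'" using B.inv_props(1)[OF bi] b'_def by simp
  have Kr': "rmod R' K" unfolding K_def using B.m_rmod by (rule prod_rmod_left)
  have mK: "m = ideal_prod a K"
  proof -
    have "m = ideal_prod R' m" using prod_unit[OF B.R1 B.m_rmod] by simp
    also have "\<dots> = ideal_prod (ideal_prod (ideal_prod a R') b') m"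
      using B.inv_props(2)[OF bi] ext b'_def by simp
    also have "\<dots> = ideal_prod a (ideal_prod R' K)" unfolding K_def by (simp add: ac_simps)
    also have "\<dots> = ideal_prod a K" using prod_unit[OF B.R1 Kr'] by simp
    finally show ?thesis .
  qed
  define J0 where "J0 = isum R K"
  have Kr: "rmod R K" using rmod_sub[OF Kr' sub] .
  have J0r: "rmod R J0" unfolding J0_def using A.rmod_R Kr by (rule isum_rmod)
  have KJ0: "K \<subseteq> J0"
  proof
    fix k assume "k \<in> K"
    then have "0 + k \<in> J0" unfolding J0_def using A.R0 by (intro isum_memI)
    then show "k \<in> J0" by simp
  qed
  have oneJ0: "1 \<in> J0"
  proof -
    have "1 + 0 \<in> J0" unfolding J0_def using A.R1 rmodD(1)[OF Kr] by (intro isum_memI)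
    then show ?thesis by simp
  qed
  have aJ0: "ideal_prod a J0 = R"
  proof
    show "ideal_prod a J0 \<subseteq> R"
    proof (rule prod_least[OF A.addcl_R])
      fix x j assume x: "x \<in> a" and j: "j \<in> J0"
      then obtain r k where rk: "r \<in> R" "k \<in> K" "j = r + k" unfolding J0_def by (auto elim: isum_memE)
      have "x * r \<in> R" using x rk a_def A.Rmult by blast
      moreover have "x * k \<in> R" using prod_mem[OF x rk(2)] mK A.mR by blast
      ultimately show "x * j \<in> R" using rk(3) A.Radd by (simp add: distrib_left)
    qed
    have "b0 * 1 \<in> ideal_prod a J0" using b0a oneJ0 by (rule prod_mem)
    moreover have "m0 \<in> ideal_prod a J0" using bm(2) mK prod_mono[OF order_refl KJ0] by blast
    ultimately have "b0 * 1 + m0 \<in> ideal_prod a J0" by (rule prod_zero(2))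
    then have one: "1 \<in> ideal_prod a J0" using bm(3) by simp
    have rm: "rmod R (ideal_prod a J0)" using J0r by (rule prod_rmod)
    show "R \<subseteq> ideal_prod a J0"
    proof
      fix r assume "r \<in> R"
      then have "r * 1 \<in> ideal_prod a J0" using rmodD(3)[OF rm _ one] by blast
      then show "r \<in> ideal_prod a J0" by simp
    qed
  qed
  have J0f: "frac_ideal F R J0"
  proof -
    have "K \<subseteq> F" unfolding K_def using A.prod_F A.mR A.RF B.frac_F[OF b'f] by blast
    then have "J0 \<subseteq> F" unfolding J0_def using A.RF A.Fadd by (auto elim!: isum_memE)
    moreover have "J0 \<noteq> {0}" using oneJ0 by auto
    moreover obtain \<delta> where "\<delta> \<in> a" "\<delta> \<noteq> 0" using A.frac_nz[OF af] by blast
    moreover have "\<forall>j\<in>J0. \<delta> * j \<in> R" using prod_mem[OF \<open>\<delta> \<in> a\<close>] aJ0 by blast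
    ultimately show ?thesis unfolding A.frac_iff using J0r a_def by blast
  qed
  have ai: "invertible_frac F R a" unfolding invertible_frac_def using af J0f aJ0 by blast
  have "a = ideal_prod a (iinv F R R)" using A.R_inv(2) prod_unit'[OF A.R1 ar] by simp
  then have "coprime_frac F R m a" unfolding coprime_frac_def using ac A.coprime_R A.R_inv(1) by blast
  then show "b \<inter> R \<in> Jstar F R m" using A.Jstar_iff ai a_def by blast
  show "ideal_prod (b \<inter> R) R' = b" using ext a_def by simp
qed

lemma ext_Pms:
  assumes p: "p \<in> Pms F R m S" shows "ideal_prod p R' \<in> Pms F R' m S"
proof -
  obtain \<alpha> where al: "p = principal R \<alpha>" "\<alpha> \<in> F" "\<alpha> \<noteq> 0" "cong1 R m \<alpha>" "\<forall>\<rho>\<in>S. \<rho> \<alpha> > 0"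
    using p unfolding Pms_def by blast
  obtain a b where ab: "a \<in> R" "b \<in> R" "b \<noteq> 0" "\<alpha> = a / b" "isum (principal R a) m = R"
    "isum (principal R b) m = R" "a - b \<in> m" using al(4) unfolding cong1_def by blast
  have aR': "a \<in> R'" "b \<in> R'" using ab(1,2) sub by auto
  obtain r y where "r \<in> R" "y \<in> m" "a * r + y = 1" using ab(5) A.principal_coprime[OF ab(1)] by auto
  then have "\<exists>r\<in>R'. \<exists>y\<in>m. a * r + y = 1" using sub by auto
  then have "isum (principal R' a) m = R'" using B.principal_coprime[OF aR'(1)] by simp
  moreover obtain r' y' where "r' \<in> R" "y' \<in> m" "b * r' + y' = 1" using ab(6) A.principal_coprime[OF ab(2)] by auto
  then have "\<exists>r\<in>R'. \<exists>y\<in>m. b * r + y = 1" using sub by auto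
  then have "isum (principal R' b) m = R'" using B.principal_coprime[OF aR'(2)] by simp
  ultimately have "cong1 R' m \<alpha>" unfolding cong1_def using ab aR' by blast
  then show ?thesis unfolding Pms_def using al ext_principal by auto
qed

end


context pair begin

lemma one_in_m: "1 \<in> m \<Longrightarrow> R' = R"
proof -
  assume "1 \<in> m"
  have "R' \<subseteq> R"
  proof
    fix r assume "r \<in> R'"
    then have "r * 1 \<in> m" using B.mmul \<open>1 \<in> m\<close> by blast
    then show "r \<in> R" using A.mR by auto
  qed
  then show ?thesis using sub by blast
qed

lemma kernel:
  assumes a: "a \<in> Jstar F R m" and ea: "ideal_prod a R' \<in> Pms F R' m S"
  shows "a \<in> Pms F R m S"
proof (cases "1 \<in> m")
  case True
  then have "R' = R" by (rule one_in_m)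
  then show ?thesis using ea prod_unit'[OF A.R1 A.Jstar_rmod[OF a]] by simp
next
  case False
  obtain \<alpha> where al: "ideal_prod a R' = principal R' \<alpha>" "\<alpha> \<in> F" "\<alpha> \<noteq> 0" "cong1 R' m \<alpha>" "\<forall>\<rho>\<in>S. \<rho> \<alpha> > 0"
    using ea unfolding Pms_def by blast
  obtain u v where uv: "u \<in> R'" "v \<in> R'" "v \<noteq> 0" "\<alpha> = u / v" "isum (principal R' u) m = R'"
    "isum (principal R' v) m = R'" "u - v \<in> m" using al(4) unfolding cong1_def by blast
  obtain t \<mu> where tm: "t \<in> R'" "\<mu> \<in> m" "v * t + \<mu> = 1" using uv(6) B.principal_coprime[OF uv(2)] by auto
  define v' where "v' = v * t"
  define u' where "u' = u * t"
  have v'e: "v' = 1 - \<mu>" using tm(3) v'_def by (simp add: algebra_simps eq_diff_eq)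
  have v'nz: "v' \<noteq> 0" using v'e tm(2) False by auto
  then have tnz: "t \<noteq> 0" using v'_def by auto
  have muR: "\<mu> \<in> R" using tm(2) A.mR by blast
  have v'R: "v' \<in> R" using v'e A.Rdiff[OF A.R1 muR] by simp
  have uvm: "u' - v' \<in> m" using B.mmul'[OF tm(1) uv(7)] u'_def v'_def by (simp add: algebra_simps)
  have "u' = v' + (u' - v')" by simp
  then have u'R: "u' \<in> R" using v'R uvm A.mR A.Radd by (metis subsetD)
  have ale: "\<alpha> = u' / v'" using uv(4) tnz u'_def v'_def by simp
  have "isum (principal R u') m = R"
  proof -
    have "\<mu> - (u' - v') \<in> m" using A.mdiff[OF tm(2) uvm] .
    moreover have "u' * 1 + (\<mu> - (u' - v')) = 1" using v'e by simp
    ultimately show ?thesis using A.principal_coprime[OF u'R] A.R1 by blast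
  qed
  moreover have "isum (principal R v') m = R"
  proof -
    have "v' * 1 + \<mu> = 1" using v'e by simp
    then show ?thesis using A.principal_coprime[OF v'R] A.R1 tm(2) by blast
  qed
  ultimately have c1: "cong1 R m \<alpha>" unfolding cong1_def using u'R v'R v'nz ale uvm by blast
  define p where "p = principal R \<alpha>"
  have pP: "p \<in> Pms F R m S" unfolding Pms_def p_def using al c1 by blast
  obtain c d where cd: "coprime_int R m c" "coprime_int R m d" "invertible_frac F R d" "a = ideal_prod c (iinv F R d)"
    using a unfolding A.Jstar_iff coprime_frac_def by blast
  have cr: "rmod R c" using cd(1) A.coprime_ideal A.ideal_iff by blast
  have ca: "c = ideal_prod a d"
  proof -
    have "ideal_prod a d = ideal_prod c (ideal_prod d (iinv F R d))" using cd(4) by (simp add: ac_simps)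
    also have "\<dots> = c" using A.inv_props(2)[OF cd(3)] prod_unit'[OF A.R1 cr] by simp
    finally show ?thesis by simp
  qed
  define V where "V = principal R v'"
  define U where "U = principal R u'"
  have Vc: "coprime_int R m V" unfolding coprime_int_def V_def
    using A.principal_ideal[OF v'R] \<open>isum (principal R v') m = R\<close> by simp
  have Uc: "coprime_int R m U" unfolding coprime_int_def U_def
    using A.principal_ideal[OF u'R] \<open>isum (principal R u') m = R\<close> by simp
  have X: "coprime_int R m (ideal_prod c V)" using A.coprime_prod[OF cd(1) Vc] .
  have Y: "coprime_int R m (ideal_prod d U)" using A.coprime_prod[OF cd(2) Uc] .
  have av: "\<alpha> * v' = u'" using ale v'nz by simp
  have "ideal_prod (ideal_prod c V) R' = ideal_prod (ideal_prod (ideal_prod a R') (ideal_prod d R')) (principal R' v')"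
    using ca ext_mult ext_principal V_def by simp
  also have "\<dots> = ideal_prod (ideal_prod (principal R' \<alpha>) (principal R' v')) (ideal_prod d R')"
    using al(1) by (simp add: ac_simps)
  also have "\<dots> = ideal_prod (principal R' u') (ideal_prod d R')"
    using B.principal_prod av by simp
  also have "\<dots> = ideal_prod (ideal_prod d R') (ideal_prod U R')"
    unfolding U_def ext_principal by (rule prod_comm)
  also have "\<dots> = ideal_prod (ideal_prod d U) R'"
    by (rule ext_mult[symmetric])
  finally have "ideal_prod (ideal_prod c V) R' = ideal_prod (ideal_prod d U) R'" .
  then have XY: "ideal_prod c V = ideal_prod d U" using ext_inj[OF X] ext_inj[OF Y] by metis
  have "ideal_prod (ideal_prod a V) d = ideal_prod (ideal_prod p V) d"
  proof -
    have "ideal_prod (ideal_prod a V) d = ideal_prod c V" using ca by (simp add: ac_simps)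
    also have "\<dots> = ideal_prod d U" using XY .
    also have "\<dots> = ideal_prod (ideal_prod p V) d"
      unfolding p_def V_def U_def using A.principal_prod av by (simp add: ac_simps)
    finally show ?thesis .
  qed
  then have "ideal_prod a V = ideal_prod p V"
    using A.cancel[OF cd(3)] prod_rmod_left A.Jstar_rmod[OF a] A.principal_rmod p_def by metis
  moreover have "invertible_frac F R V" unfolding V_def using A.principal_inv(1) v'R A.RF v'nz by blast
  ultimately have "a = p"
    using A.cancel A.Jstar_rmod[OF a] A.principal_rmod p_def by metis
  then show ?thesis using pP by simp
qed

end


context pair begin

lemma good_elem:
  assumes d: "coprime_int R' m d" "invertible_frac F R' d"
  shows "\<exists>x\<in>d. x \<noteq> 0 \<and> x - 1 \<in> m"
proof -
  obtain x0 y0 where xy: "x0 \<in> d" "y0 \<in> m" "x0 + y0 = 1" using d(1) B.coprime_iff by blast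
  show ?thesis
  proof (cases "x0 = 0")
    case False
    have "x0 - 1 = - y0" using xy(3) by (simp add: algebra_simps eq_diff_eq)
    then show ?thesis using False xy B.mneg by auto
  next
    case True
    then have one: "1 \<in> m" using xy by simp
    obtain \<delta> where de: "\<delta> \<in> d" "\<delta> \<noteq> 0" using B.frac_nz[OF B.inv_frac[OF d(2)]] by blast
    have "\<delta> \<in> R'" using de(1) d(1) B.coprime_ideal B.ideal_iff by blast
    then have "\<delta> * 1 \<in> m" using B.mmul one by blast
    then have "\<delta> - 1 \<in> m" using B.mdiff one by simp
    then show ?thesis using de by blast
  qed
qed

lemma surj:
  assumes J: "J \<in> Jstar F R' m" and S: "\<forall>\<rho>\<in>S. real_embedding F \<rho>"
  shows "\<exists>a\<in>Jstar F R m. \<exists>p\<in>Pms F R' m S. ideal_prod J p = ideal_prod a R'"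
proof -
  obtain c d where cd: "coprime_int R' m c" "coprime_int R' m d" "invertible_frac F R' d" "J = ideal_prod c (iinv F R' d)"
    using J unfolding B.Jstar_iff coprime_frac_def by blast
  have dI: "d \<subseteq> R'" "rmod R' d" using cd(2) B.coprime_ideal B.ideal_iff by blast+
  obtain x where x: "x \<in> d" "x \<noteq> 0" "x - 1 \<in> m" using good_elem[OF cd(2,3)] by blast
  have xR: "x \<in> R'" using x(1) dI by blast
  have xF: "x \<in> F" using xR B.RF by blast
  define \<alpha> where "\<alpha> = x * x"
  have aR: "\<alpha> \<in> R'" unfolding \<alpha>_def using B.Rmult xR by blast
  have aF: "\<alpha> \<in> F" using aR B.RF by blast
  have anz: "\<alpha> \<noteq> 0" unfolding \<alpha>_def using x(2) by simp
  have am: "\<alpha> - 1 \<in> m"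
  proof -
    have "x + 1 \<in> R'" using B.Radd[OF xR B.R1] .
    then have "(x - 1) * (x + 1) \<in> m" using B.mmul'[OF _ x(3)] by blast
    then show ?thesis unfolding \<alpha>_def by (simp add: algebra_simps)
  qed
  have "isum (principal R' \<alpha>) m = R'"
  proof -
    have "\<alpha> * 1 + (- (\<alpha> - 1)) = 1" by simp
    then have "\<exists>r\<in>R'. \<exists>y\<in>m. \<alpha> * r + y = 1" using B.R1 B.mneg[OF am] by blast
    then show ?thesis using B.principal_coprime[OF aR] by simp
  qed
  moreover have "isum (principal R' 1) m = R'"
  proof -
    have "\<exists>r\<in>R'. \<exists>y\<in>m. 1 * r + y = 1" using B.R1 B.m0 by (intro bexI[of _ 1] bexI[of _ 0]) auto
    then show ?thesis using B.principal_coprime[OF B.R1] by simp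
  qed
  moreover have "\<alpha> = \<alpha> / 1" by simp
  ultimately have c1: "cong1 R' m \<alpha>" unfolding cong1_def using aR B.R1 am
    by (intro bexI[of _ \<alpha>] bexI[of _ 1]) auto
  have pos: "\<forall>\<rho>\<in>S. \<rho> \<alpha> > 0"
  proof
    fix \<rho> assume r: "\<rho> \<in> S"
    then have "\<rho> x * \<rho> (inverse x) = 1" using emb_inv[of F \<rho> x "inverse x"] S xF B.Finv x(2) by simp
    then have "\<rho> x \<noteq> 0" by auto
    moreover have "\<rho> \<alpha> = \<rho> x * \<rho> x" unfolding \<alpha>_def using emb_mult S r xF by blast
    ultimately show "\<rho> \<alpha> > 0" by (simp add: not_square_less_zero order_less_le)
  qed
  define p where "p = principal R' \<alpha>"
  have pP: "p \<in> Pms F R' m S" unfolding Pms_def p_def using aF anz c1 pos by blast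
  have pd: "p \<subseteq> d"
  proof
    fix z assume "z \<in> p"
    then obtain r where r: "r \<in> R'" "z = \<alpha> * r" unfolding p_def by (auto elim: principal_memE)
    have "(x * r) * x \<in> d" using rmodD(3)[OF dI(2) _ x(1)] B.Rmult[OF xR r(1)] by blast
    then show "z \<in> d" using r unfolding \<alpha>_def by (simp add: ac_simps)
  qed
  define e where "e = ideal_prod p (iinv F R' d)"
  have "e \<subseteq> ideal_prod d (iinv F R' d)" unfolding e_def using pd by (intro prod_mono) auto
  then have eR: "e \<subseteq> R'" using B.inv_props(2)[OF cd(3)] by simp
  have er: "rmod R' e" unfolding e_def p_def using B.principal_rmod by (rule prod_rmod_left)
  have one_inv: "1 \<in> iinv F R' d" unfolding iinv_def using B.F1 dI(1) by auto
  have "\<alpha> * 1 * 1 \<in> e" unfolding e_def p_def using principal_mem[OF B.R1] one_inv by (rule prod_mem)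
  then have ae: "\<alpha> \<in> e" by simp
  have ec: "coprime_int R' m e"
    using B.coprimeI[OF _ ae B.mneg[OF am]] B.ideal_iff eR er by simp
  have bJ: "ideal_prod J p = ideal_prod c e" unfolding e_def cd(4) by (simp add: ac_simps)
  have bc: "coprime_int R' m (ideal_prod J p)" using bJ B.coprime_prod[OF cd(1) ec] by simp
  have bi: "invertible_frac F R' (ideal_prod J p)"
    using B.prod_inv(1) J B.Jstar_iff B.principal_inv(1)[OF aF anz] p_def by blast
  show ?thesis using contract[OF bc bi] pP by auto
qed

end


theorem proposition3p5:
  fixes F R R' m :: "complex set" and S :: "(complex \<Rightarrow> real) set"
  assumes "order_of F R" and "order_of F R'" and "R \<subseteq> R'"
    and "ideal_of R' m" and "m \<subseteq> R"
    and "\<forall>\<rho>\<in>S. real_embedding F \<rho>"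
  shows "\<exists>h. h \<in> iso (Clms F R m S) (Clms F R' m S) \<and>
           (\<forall>a\<in>Jstar F R m. h (Pms F R m S #>\<^bsub>Jgrp F R m\<^esub> a) =
                              Pms F R' m S #>\<^bsub>Jgrp F R' m\<^esub> ideal_prod a R')"
proof -
  note A = assms
  interpret B0: ordm F R' m by unfold_locales (rule A(2), rule A(4))
  interpret A0: ord F R by unfold_locales (rule A(1))
  have mA: "ideal_of R m" unfolding A0.ideal_iff using A(5) rmod_sub[OF B0.m_rmod A(3)] by blast
  interpret P: pair F R R' m by unfold_locales (rule A(1), rule mA, rule A(2), rule A(4), rule A(3))
  define G where "G = Jgrp F R m"
  define G' where "G' = Jgrp F R' m"
  define Pm where "Pm = Pms F R m S"
  define Pm' where "Pm' = Pms F R' m S"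
  interpret G: comm_group G unfolding G_def by (rule P.A.Jgrp_comm_group)
  interpret G': comm_group G' unfolding G'_def by (rule B0.Jgrp_comm_group)
  have sP: "subgroup Pm G" unfolding Pm_def G_def using P.A.Pms_subgroup A(6) by blast
  have sP': "subgroup Pm' G'" unfolding Pm'_def G'_def using B0.Pms_subgroup A(6) by blast
  have nP': "Pm' \<lhd> G'" using G'.subgroup_imp_normal[OF sP'] .
  define H where "H = G' Mod Pm'"
  have gH: "group H" unfolding H_def using normal.factorgroup_is_group[OF nP'] .
  define \<Phi> where "\<Phi> = (\<lambda>a. Pm' #>\<^bsub>G'\<^esub> ideal_prod a R')"
  have extc: "ideal_prod a R' \<in> carrier G'" if "a \<in> carrier G" for a
    using that P.ext_Jstar unfolding G_def G'_def by simp
  have hom: "\<Phi> \<in> hom G H"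
  proof (rule homI)
    fix a assume "a \<in> carrier G"
    then show "\<Phi> a \<in> carrier H" unfolding H_def \<Phi>_def FactGroup_def RCOSETS_def using extc by auto
  next
    fix a b assume a: "a \<in> carrier G" and b: "b \<in> carrier G"
    have "\<Phi> a \<otimes>\<^bsub>H\<^esub> \<Phi> b = Pm' #>\<^bsub>G'\<^esub> (ideal_prod a R' \<otimes>\<^bsub>G'\<^esub> ideal_prod b R')"
      unfolding H_def \<Phi>_def using normal.rcos_sum[OF nP' extc[OF a] extc[OF b]] by simp
    also have "\<dots> = \<Phi> (a \<otimes>\<^bsub>G\<^esub> b)" unfolding \<Phi>_def G_def G'_def using P.ext_mult by simp
    finally show "\<Phi> (a \<otimes>\<^bsub>G\<^esub> b) = \<Phi> a \<otimes>\<^bsub>H\<^esub> \<Phi> b" by simp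
  qed
  interpret gh: group_hom G H \<Phi>
    unfolding group_hom_def group_hom_axioms_def using G.is_group gH hom by blast
  have PmJ: "Pm \<subseteq> carrier G" using sP subgroup.subset by blast
  have PmJ': "Pm' \<subseteq> carrier G'" using sP' subgroup.subset by blast
  have ker: "kernel G H \<Phi> = Pm"
  proof
    show "kernel G H \<Phi> \<subseteq> Pm"
    proof
      fix a assume "a \<in> kernel G H \<Phi>"
      then have a: "a \<in> carrier G" "Pm' #>\<^bsub>G'\<^esub> ideal_prod a R' = Pm'"
        unfolding kernel_def \<Phi>_def H_def by auto
      then have "ideal_prod a R' \<in> Pm'" using G'.coset_join1[OF a(2) extc[OF a(1)] sP'] by simp
      then show "a \<in> Pm" using P.kernel a(1) unfolding Pm_def Pm'_def G_def by simp
    qed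
    show "Pm \<subseteq> kernel G H \<Phi>"
    proof
      fix a assume a: "a \<in> Pm"
      then have ac: "a \<in> carrier G" using PmJ by blast
      have "ideal_prod a R' \<in> Pm'" using a P.ext_Pms unfolding Pm_def Pm'_def by blast
      then have "\<Phi> a = Pm'" unfolding \<Phi>_def using G'.coset_join2[OF extc[OF ac] sP'] by simp
      then show "a \<in> kernel G H \<Phi>" unfolding kernel_def H_def using ac by simp
    qed
  qed
  have onto: "\<Phi> ` carrier G = carrier H"
  proof
    show "\<Phi> ` carrier G \<subseteq> carrier H" using hom unfolding hom_def by auto
    show "carrier H \<subseteq> \<Phi> ` carrier G"
    proof
      fix X assume "X \<in> carrier H"
      then obtain J where J: "J \<in> carrier G'" "X = Pm' #>\<^bsub>G'\<^esub> J"
        unfolding H_def FactGroup_def RCOSETS_def by auto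
      obtain a p where ap: "a \<in> Jstar F R m" "p \<in> Pm'" "ideal_prod J p = ideal_prod a R'"
        using P.surj[OF _ A(6), of J] J(1) unfolding G'_def Pm'_def by auto
      have pc: "p \<in> carrier G'" using ap(2) PmJ' by blast
      have "\<Phi> a = Pm' #>\<^bsub>G'\<^esub> (p \<otimes>\<^bsub>G'\<^esub> J)"
        unfolding \<Phi>_def using ap(3) prod_comm unfolding G'_def by simp
      also have "\<dots> = (Pm' #>\<^bsub>G'\<^esub> p) #>\<^bsub>G'\<^esub> J"
        using G'.coset_mult_assoc[OF PmJ' pc J(1)] by simp
      also have "\<dots> = X" using G'.coset_join2[OF pc sP' ap(2)] J(2) by simp
      finally show "X \<in> \<Phi> ` carrier G" using ap(1) unfolding G_def by auto
    qed
  qed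
  define h where "h = (\<lambda>X. the_elem (\<Phi> ` X))"
  have iso: "h \<in> iso (G Mod Pm) H" unfolding h_def using gh.FactGroup_iso_set[OF onto] ker by simp
  have val: "h (Pm #>\<^bsub>G\<^esub> a) = \<Phi> a" if a: "a \<in> carrier G" for a
  proof -
    have "\<Phi> ` (Pm #>\<^bsub>G\<^esub> a) = {\<Phi> a}"
    proof
      show "\<Phi> ` (Pm #>\<^bsub>G\<^esub> a) \<subseteq> {\<Phi> a}"
      proof
        fix y assume "y \<in> \<Phi> ` (Pm #>\<^bsub>G\<^esub> a)"
        then obtain p where p: "p \<in> Pm" "y = \<Phi> (p \<otimes>\<^bsub>G\<^esub> a)" unfolding r_coset_def by auto
        have pc: "p \<in> carrier G" using p(1) PmJ by blast
        have "p \<in> kernel G H \<Phi>" using p(1) ker by simp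
        then have "\<Phi> p = \<one>\<^bsub>H\<^esub>" unfolding kernel_def by simp
        then have "\<Phi> (p \<otimes>\<^bsub>G\<^esub> a) = \<Phi> a" using gh.hom_mult[OF pc a] gh.H.l_one gh.hom_closed[OF a] by simp
        then show "y \<in> {\<Phi> a}" using p(2) by simp
      qed
      have "\<one>\<^bsub>G\<^esub> \<in> Pm" using subgroup.one_closed[OF sP] .
      then have "\<one>\<^bsub>G\<^esub> \<otimes>\<^bsub>G\<^esub> a \<in> Pm #>\<^bsub>G\<^esub> a" unfolding r_coset_def by auto
      then have "a \<in> Pm #>\<^bsub>G\<^esub> a" using a by simp
      then show "{\<Phi> a} \<subseteq> \<Phi> ` (Pm #>\<^bsub>G\<^esub> a)" by auto
    qed
    then show ?thesis unfolding h_def by simp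
  qed
  show ?thesis
  proof (intro exI conjI ballI)
    show "h \<in> iso (Clms F R m S) (Clms F R' m S)"
      using iso unfolding Clms_def H_def G_def G'_def Pm_def Pm'_def by simp
    fix a assume "a \<in> Jstar F R m"
    then show "h (Pms F R m S #>\<^bsub>Jgrp F R m\<^esub> a) = Pms F R' m S #>\<^bsub>Jgrp F R' m\<^esub> ideal_prod a R'"
      using val unfolding \<Phi>_def G_def G'_def Pm_def Pm'_def by simp
  qed
qed


end
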